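(* Let $0<s<1$, $N\ge1$, $m>N/2$, $\eta(x):=(1+|x|^2)^{-m/2}$, $R\ge R_0\ge1$, and let $\psi\in C^\infty(\mathbb R^N)$ with $0\le\psi\le1$, $\psi\equiv0$ on $B_1$, $\psi\equiv1$ on $\mathbb R^N\setminus B_2$. Define $\eta_R(x):=\eta(x/R)\psi(x/R_0)$ and $\rho_R(x):=\rho(\eta_R;x)$. Then there exists $C=C(N,s,m,R_0)>0$ such that $$\rho_R(x)\le\begin{cases}C\,\eta(x/R)^2|x|^{-N-2s}+2R^{-2s}\rho(\eta;x/R)&\text{if }|x|\ge3R_0,\\ C+2R^{-2s}\rho(\eta;x/R)&\text{if }|x|\le3R_0.\end{cases}$$
   Context: For suitable $\zeta$ (e.g. $\zeta\in W^{1,\infty}(\mathbb R^N)\cap H^1(\mathbb R^N)$), $\rho(\zeta;x):=\int_{\mathbb R^N}\frac{(\zeta(x)-\zeta(y))^2}{|x-y|^{N+2s}}dy$. $B_r=\{x\in\mathbb R^N:|x|<r\}$. *)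

theory Defs
  imports "HOL-Analysis.Analysis"
begin

text \<open>C-infinity functions on a Euclidean space: differentiable everywhere, with
  every partial derivative (along the standard basis) again C-infinity.\<close>
coinductive smooth_fun :: "('a::euclidean_space \<Rightarrow> real) \<Rightarrow> bool" where
  "f differentiable_on UNIV \<Longrightarrow>
   (\<forall>i\<in>Basis. smooth_fun (\<lambda>x. frechet_derivative f (at x) i)) \<Longrightarrow> smooth_fun f"

definition frac_rho :: "real \<Rightarrow> ('a::euclidean_space \<Rightarrow> real) \<Rightarrow> 'a \<Rightarrow> ennreal" where
  "frac_rho s \<zeta> x = (\<integral>\<^sup>+ y. ennreal ((\<zeta> x - \<zeta> y)\<^sup>2 / norm (x - y) powr (real DIM('a) + 2 * s)) \<partial>lborel)"

definition eta_fun :: "real \<Rightarrow> 'a::euclidean_space \<Rightarrow> real" where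
  "eta_fun m x = (1 + (norm x)\<^sup>2) powr (- m / 2)"

end

theory Submission
  imports Defs
begin


lemma psi_lip:
  fixes \<psi> :: "'a::euclidean_space \<Rightarrow> real"
  assumes sm: "smooth_fun \<psi>" and one: "\<And>x. norm x \<ge> 2 \<Longrightarrow> \<psi> x = 1"
  shows "\<exists>L\<ge>0. \<forall>u v. \<bar>\<psi> u - \<psi> v\<bar> \<le> L * norm (u - v)"
proof -
  from sm have dif: "\<psi> differentiable_on UNIV"
    and sd: "\<forall>i\<in>Basis. smooth_fun (\<lambda>x. frechet_derivative \<psi> (at x) i)"
    by (auto elim: smooth_fun.cases)
  define D where "D x = frechet_derivative \<psi> (at x)" for x
  have hd: "(\<psi> has_derivative D x) (at x)" for x
    unfolding D_def using dif by (simp add: differentiable_on_def frechet_derivative_works)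
  have lin: "linear (D x)" for x using hd has_derivative_linear by blast
  have cont: "continuous_on UNIV (\<lambda>x. D x i)" if "i \<in> Basis" for i
  proof -
    have "smooth_fun (\<lambda>x. D x i)" using sd that unfolding D_def by auto
    then have "(\<lambda>x. D x i) differentiable_on UNIV" by (auto elim: smooth_fun.cases)
    then show ?thesis by (rule differentiable_imp_continuous_on)
  qed
  have zero: "D x = (\<lambda>_. 0)" if "norm x > 2" for x
  proof -
    have "((\<lambda>_. 1::real) has_derivative (\<lambda>_. 0)) (at x)" by simp
    then have "(\<psi> has_derivative (\<lambda>_. 0)) (at x)"
      by (rule has_derivative_transform_within_open[where s="{x. norm x > 2}"])
         (auto intro!: open_Collect_less continuous_intros that one)
    then show ?thesis unfolding D_def using frechet_derivative_at by metis
  qed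
  have "\<forall>i\<in>Basis. \<exists>B. \<forall>x. \<bar>D x i\<bar> \<le> B"
  proof
    fix i :: 'a assume i: "i \<in> Basis"
    have "compact ((\<lambda>x. D x i) ` cball 0 2)"
      by (rule compact_continuous_image) (auto intro: continuous_on_subset[OF cont[OF i]])
    then obtain B where B: "\<And>y. y \<in> (\<lambda>x. D x i) ` cball 0 2 \<Longrightarrow> norm y \<le> B"
      using compact_imp_bounded bounded_iff by metis
    have "\<bar>D x i\<bar> \<le> B" for x
    proof (cases "norm x > 2")
      case True
      then have "\<bar>D x i\<bar> = 0" using zero by simp
      moreover have "norm (D 0 i) \<le> B" by (intro B) auto
      ultimately show ?thesis by simp
    next
      case False then show ?thesis using B[of "D x i"] by auto
    qed
    then show "\<exists>B. \<forall>x. \<bar>D x i\<bar> \<le> B" by blast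
  qed
  then obtain Bf where Bf: "\<And>i x. i \<in> Basis \<Longrightarrow> \<bar>D x i\<bar> \<le> Bf i" by metis
  define B where "B = (\<Sum>i\<in>Basis. Bf i)"
  have Bf0: "i \<in> Basis \<Longrightarrow> 0 \<le> Bf i" for i using Bf[of i 0] by linarith
  have B0: "0 \<le> B" unfolding B_def by (auto intro: sum_nonneg Bf0)
  have on: "onorm (D x) \<le> B" for x
  proof (rule onorm_bound[OF B0])
    fix h :: 'a
    have "D x h = D x (\<Sum>i\<in>Basis. (h \<bullet> i) *\<^sub>R i)" by (simp add: euclidean_representation)
    also have "\<dots> = (\<Sum>i\<in>Basis. (h \<bullet> i) * D x i)"
      using lin[of x] by (simp add: linear_sum linear_cmul)
    finally have "norm (D x h) \<le> (\<Sum>i\<in>Basis. \<bar>h \<bullet> i\<bar> * \<bar>D x i\<bar>)"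
      by (simp add: sum_abs[THEN order_trans] abs_mult)
    also have "\<dots> \<le> (\<Sum>i\<in>Basis. norm h * Bf i)"
      by (intro sum_mono mult_mono) (auto simp: Basis_le_norm Bf)
    finally show "norm (D x h) \<le> B * norm h" by (simp add: B_def sum_distrib_left mult.commute)
  qed
  have "\<bar>\<psi> u - \<psi> v\<bar> \<le> B * norm (u - v)" for u v
    using differentiable_bound[of UNIV \<psi> D B u v] hd on by auto
  then show ?thesis using B0 by blast
qed


lemma pow2_ivl: "1 \<le> (t::real) \<Longrightarrow> \<exists>k::nat. 2^k \<le> t \<and> t < 2^(k+1)"
proof -
  assume t: "1 \<le> t"
  define k where "k = nat \<lfloor>log 2 t\<rfloor>"
  have l0: "log 2 t \<ge> 0" using t by simp
  have rk: "real k = of_int \<lfloor>log 2 t\<rfloor>" unfolding k_def using l0 by simp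
  have "2 powr real k \<le> 2 powr log 2 t" unfolding rk by (intro powr_mono) auto
  moreover have "2 powr log 2 t < 2 powr (real k + 1)" unfolding rk
    using floor_correct[of "log 2 t"] by (intro powr_less_mono) auto
  ultimately have "2 powr real k \<le> t \<and> t < 2 powr (real k + 1)" using t by simp
  then show ?thesis by (intro exI[of _ k]) (simp add: powr_realpow[symmetric] add.commute powr_add)
qed
lemma ennreal_term_le_suminf: "(f::nat\<Rightarrow>ennreal) k \<le> suminf f"
  using sum_le_suminf[of f "{k}"] by (simp add: summableI)
lemma cball_sets: "cball (x::'a::euclidean_space) r \<in> sets lborel" by (simp add: borel_closed)
lemma ind_meas: "(\<lambda>y. ennreal c * indicator (cball (x::'a::euclidean_space) r) y) \<in> borel_measurable lborel"
  by (intro borel_measurable_times_ennreal borel_measurable_indicator measurable_const cball_sets) simp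


lemma pow_powr: "0 < (c::real) \<Longrightarrow> (c ^ k) powr y = c powr (real k * y)"
  by (simp add: powr_realpow[symmetric] powr_powr)

lemma kernel_bound:
  fixes W s :: real
  assumes s0: "0 < s" and s1: "s < 1" and W0: "0 \<le> W"
  shows "\<exists>K. \<forall>x::'a::euclidean_space. (\<integral>\<^sup>+ y. ennreal (min (W * (norm (x - y))\<^sup>2) 1
            / norm (x - y) powr (real DIM('a) + 2 * s)) \<partial>lborel) \<le> ennreal K"
proof -
  define N where "N = DIM('a)"
  define p where "p = real N + 2 * s"
  define \<omega> where "\<omega> = unit_ball_vol (real N)"
  have \<omega>0: "0 \<le> \<omega>" unfolding \<omega>_def by simp
  have p0: "0 < p" unfolding p_def using s0 by simp
  define a where "a k = \<omega> * 2 ^ N * (2 powr (- 2 * s)) ^ k" for k :: nat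
  define b where "b k = W * \<omega> * 2 powr p * ((1/2) powr (2 - 2 * s)) ^ k" for k :: nat
  have sa: "summable a" unfolding a_def
    by (intro summable_mult summable_geometric) (use s0 in \<open>auto simp: powr_minus_divide\<close>)
  have q2: "(1/2::real) powr (2 - 2 * s) < 1"
  proof -
    have "(1/2::real) powr (2 - 2 * s) = 2 powr (- (2 - 2 * s))"
      by (simp add: powr_minus_divide[symmetric] powr_divide)
    also have "\<dots> < 2 powr 0" using s1 by (intro powr_less_mono) auto
    finally show ?thesis by simp
  qed
  have sb: "summable b" unfolding b_def
    by (intro summable_mult summable_geometric) (use q2 in \<open>auto\<close>)
  have a0: "0 \<le> a k" for k unfolding a_def using \<omega>0 by simp
  have b0: "0 \<le> b k" for k unfolding b_def using \<omega>0 W0 by simp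
  show ?thesis
  proof (intro exI allI)
    fix x :: 'a
    define g where "g y = min (W * (norm (x - y))\<^sup>2) 1 / norm (x - y) powr p" for y
    define f1 where "f1 k y = ennreal ((2^k) powr (-p)) * indicator (cball x (2^(k+1))) y"
      for k :: nat and y :: 'a
    define f2 where "f2 k y = ennreal (W * ((1/2)^k)\<^sup>2 * ((1/2)^(k+1)) powr (-p))
        * indicator (cball x ((1/2)^k)) y" for k :: nat and y :: 'a
    have pt: "ennreal (g y) \<le> (\<Sum>k. f1 k y) + (\<Sum>k. f2 k y)" for y
    proof -
      define h where "h = norm (x - y)"
      have h0: "0 \<le> h" unfolding h_def by simp
      have gh: "g y = min (W * h\<^sup>2) 1 / h powr p" unfolding g_def h_def by simp
      consider "h = 0" | "1 \<le> h" | "0 < h" "h < 1" using h0 by linarith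
      then show ?thesis
      proof cases
        case 1 then show ?thesis by (simp add: gh)
      next
        case 2
        then obtain k :: nat where k: "2^k \<le> h" "h < 2^(k+1)" using pow2_ivl by blast
        have "g y \<le> 1 / h powr p" unfolding gh using 2 by (intro divide_right_mono) auto
        also have "\<dots> = h powr (-p)" by (simp add: powr_minus_divide)
        also have "\<dots> \<le> (2^k) powr (-p)" using k p0 by (intro powr_mono2') auto
        finally have "ennreal (g y) \<le> f1 k y" unfolding f1_def using k
          by (auto simp: indicator_def dist_norm h_def)
        also have "\<dots> \<le> (\<Sum>k. f1 k y)" by (rule ennreal_term_le_suminf)
        finally show ?thesis by (simp add: add_increasing2)
      next
        case 3
        then obtain k :: nat where k: "2^k \<le> 1/h" "1/h < 2^(k+1)" using pow2_ivl[of "1/h"] by auto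
        have hk: "h \<le> (1/2)^k" using k(1) 3 by (simp add: field_simps power_divide)
        have hk1: "(1/2)^(k+1) < h" using k(2) 3 by (simp add: field_simps power_divide)
        have "g y \<le> W * h\<^sup>2 / h powr p" unfolding gh using 3 by (intro divide_right_mono) auto
        also have "\<dots> = W * h\<^sup>2 * h powr (-p)" by (simp add: powr_minus_divide)
        also have "\<dots> \<le> W * ((1/2)^k)\<^sup>2 * ((1/2)^(k+1)) powr (-p)"
          using hk hk1 p0 3 W0
          by (intro mult_mono powr_mono2' power_mono mult_left_mono) auto
        finally have "ennreal (g y) \<le> f2 k y" unfolding f2_def using hk
          by (auto simp: indicator_def dist_norm h_def intro: ennreal_leI)
        also have "\<dots> \<le> (\<Sum>k. f2 k y)" by (rule ennreal_term_le_suminf)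
        finally show ?thesis by (simp add: add_increasing)
      qed
    qed
    have i1: "integral\<^sup>N lborel (f1 k) = ennreal (a k)" for k
    proof -
      have "integral\<^sup>N lborel (f1 k) = ennreal ((2^k) powr (-p)) * emeasure lborel (cball x (2^(k+1)))"
        unfolding f1_def by (rule nn_integral_cmult_indicator) (rule cball_sets)
      also have "\<dots> = ennreal ((2^k) powr (-p) * (\<omega> * (2^(k+1))^N))"
        by (simp add: emeasure_cball \<omega>_def N_def ennreal_mult)
      also have "(2^k) powr (-p) * (\<omega> * (2^(k+1))^N) = a k"
        unfolding a_def p_def
        by (simp add: pow_powr powr_power powr_realpow[symmetric] powr_add[symmetric]
             power_mult_distrib powr_powr algebra_simps)
      finally show ?thesis .
    qed
    have i2: "integral\<^sup>N lborel (f2 k) = ennreal (b k)" for k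
    proof -
      have "integral\<^sup>N lborel (f2 k) = ennreal (W * ((1/2)^k)\<^sup>2 * ((1/2)^(k+1)) powr (-p))
           * emeasure lborel (cball x ((1/2)^k))"
        unfolding f2_def by (rule nn_integral_cmult_indicator) (rule cball_sets)
      also have "\<dots> = ennreal (W * ((1/2)^k)\<^sup>2 * ((1/2)^(k+1)) powr (-p) * (\<omega> * ((1/2)^k)^N))"
        using W0 by (simp add: emeasure_cball \<omega>_def N_def ennreal_mult)
      also have "W * ((1/2)^k)\<^sup>2 * ((1/2)^(k+1)) powr (-p) * (\<omega> * ((1/2)^k)^N) = b k"
      proof -
        define u :: real where "u = (1/2)^k"
        have u0: "0 < u" unfolding u_def by simp
        have e1: "((1/2::real)^(k+1)) powr (-p) = u powr (-p) * 2 powr p"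
        proof -
          have h: "(1/2::real)^(k+1) = u/2" by (simp add: u_def)
          have "(u/2) powr (-p) = u powr (-p) / 2 powr (-p)"
            using u0 powr_divide[of u 2 "-p"] by linarith
          also have "2 powr (-p) = 1 / 2 powr p" by (rule powr_minus_divide)
          finally have "(u/2) powr (-p) = u powr (-p) * 2 powr p" by simp
          then show ?thesis unfolding h .
        qed
        have e2: "u\<^sup>2 * u ^ N * u powr (-p) = u powr (2 - 2 * s)"
        proof -
          have "u\<^sup>2 * u ^ N = u ^ (N + 2)" by (simp add: power_add power2_eq_square)
          also have "\<dots> = u powr (real N + 2)" using powr_realpow[of u "N+2"] u0 by (simp add: add.commute)
          finally have "u\<^sup>2 * u ^ N * u powr (-p) = u powr (real N + 2) * u powr (-p)" by simp
          also have "\<dots> = u powr (2 - 2 * s)" by (simp add: powr_add[symmetric] p_def)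
          finally show ?thesis .
        qed
        have e3: "u powr (2 - 2 * s) = ((1/2) powr (2 - 2 * s)) ^ k"
          unfolding u_def by (simp add: pow_powr powr_power mult.commute)
        have "W * ((1/2)^k)\<^sup>2 * ((1/2)^(k+1)) powr (-p) * (\<omega> * ((1/2)^k)^N)
            = W * \<omega> * 2 powr p * (u\<^sup>2 * u ^ N * u powr (-p))"
          unfolding e1 u_def[symmetric] by (simp only: mult_ac)
        also have "\<dots> = W * \<omega> * 2 powr p * ((1/2) powr (2 - 2 * s)) ^ k"
          unfolding e2 e3 ..
        finally show ?thesis unfolding b_def .
      qed
      finally show ?thesis .
    qed
    have m1: "f1 k \<in> borel_measurable lborel" for k unfolding f1_def by (rule ind_meas)
    have m2: "f2 k \<in> borel_measurable lborel" for k unfolding f2_def by (rule ind_meas)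
    have "(\<integral>\<^sup>+ y. ennreal (g y) \<partial>lborel) \<le> (\<integral>\<^sup>+ y. (\<Sum>k. f1 k y) + (\<Sum>k. f2 k y) \<partial>lborel)"
      by (intro nn_integral_mono pt)
    also have "\<dots> = (\<integral>\<^sup>+ y. (\<Sum>k. f1 k y) \<partial>lborel) + (\<integral>\<^sup>+ y. (\<Sum>k. f2 k y) \<partial>lborel)"
      by (rule nn_integral_add) (rule borel_measurable_suminf_order, rule m1, rule borel_measurable_suminf_order, rule m2)
    also have "\<dots> = (\<Sum>k. integral\<^sup>N lborel (f1 k)) + (\<Sum>k. integral\<^sup>N lborel (f2 k))"
      by (simp only: nn_integral_suminf[OF m1] nn_integral_suminf[OF m2])
    also have "\<dots> = (\<Sum>k. ennreal (a k)) + (\<Sum>k. ennreal (b k))"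
      by (simp only: i1 i2)
    also have "\<dots> = ennreal (suminf a + suminf b)"
      by (simp only: suminf_ennreal2[OF a0 sa] suminf_ennreal2[OF b0 sb] ennreal_plus[OF suminf_nonneg[OF sa a0] suminf_nonneg[OF sb b0]])
    finally show "(\<integral>\<^sup>+ y. ennreal (min (W * (norm (x - y))\<^sup>2) 1
            / norm (x - y) powr (real DIM('a) + 2 * s)) \<partial>lborel) \<le> ennreal (suminf a + suminf b)"
      unfolding g_def p_def N_def .
  qed
qed


lemma eta_cont: "continuous_on UNIV (eta_fun m :: 'a::euclidean_space \<Rightarrow> real)"
  unfolding eta_fun_def[abs_def]
  by (intro continuous_intros) (metis add_pos_nonneg zero_less_one zero_le_power2 less_irrefl)

lemma eta_meas[measurable]: "(eta_fun m :: 'a::euclidean_space \<Rightarrow> real) \<in> borel_measurable borel"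
  by (rule borel_measurable_continuous_onI[OF eta_cont])

lemma scale_rho:
  fixes x :: "'a::euclidean_space" and R s m :: real
  assumes R: "0 < R"
  shows "(\<integral>\<^sup>+ y. ennreal ((eta_fun m (x /\<^sub>R R) - eta_fun m (y /\<^sub>R R))\<^sup>2
            / norm (x - y) powr (real DIM('a) + 2 * s)) \<partial>lborel)
       = ennreal (R powr (- 2 * s)) * frac_rho s (eta_fun m) (x /\<^sub>R R)"
proof -
  define p where "p = real DIM('a) + 2 * s"
  define f where "f y = ennreal ((eta_fun m (x /\<^sub>R R) - eta_fun m (y /\<^sub>R R))\<^sup>2 / norm (x - y) powr p)" for y
  have fm[measurable]: "f \<in> borel_measurable borel" unfolding f_def by measurable
  have "integral\<^sup>N lborel f = integral\<^sup>N (density (distr lborel borel (\<lambda>z. 0 + R *\<^sub>R z)) (\<lambda>_. \<bar>R\<bar> ^ DIM('a))) f"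
    using lborel_affine[of R "0::'a"] R by simp
  also have "\<dots> = (\<integral>\<^sup>+ z. ennreal (\<bar>R\<bar> ^ DIM('a)) * f (R *\<^sub>R z) \<partial>lborel)"
    by (subst nn_integral_density) (auto simp: nn_integral_distr)
  also have "\<dots> = (\<integral>\<^sup>+ z. ennreal (R powr (- 2 * s)) * ennreal ((eta_fun m (x /\<^sub>R R) - eta_fun m z)\<^sup>2
            / norm (x /\<^sub>R R - z) powr p) \<partial>lborel)"
  proof (intro nn_integral_cong)
    fix z :: 'a
    have n: "norm (x - R *\<^sub>R z) = R * norm (x /\<^sub>R R - z)"
    proof -
      have "x - R *\<^sub>R z = R *\<^sub>R (x /\<^sub>R R - z)" using R by (simp add: algebra_simps)
      then show ?thesis using R by simp
    qed
    have "\<bar>R\<bar> ^ DIM('a) * ((eta_fun m (x /\<^sub>R R) - eta_fun m z)\<^sup>2 / (R * norm (x /\<^sub>R R - z)) powr p)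
        = R powr (- 2 * s) * ((eta_fun m (x /\<^sub>R R) - eta_fun m z)\<^sup>2 / norm (x /\<^sub>R R - z) powr p)"
    proof -
      have h1: "\<bar>R\<bar> ^ DIM('a) = R powr real DIM('a)" using R by (simp add: powr_realpow)
      have h2: "(R * norm (x /\<^sub>R R - z)) powr p = R powr p * norm (x /\<^sub>R R - z) powr p"
        using R by (simp add: powr_mult)
      have h3: "R powr real DIM('a) / R powr p = R powr (- 2 * s)"
        unfolding p_def by (simp add: powr_diff[symmetric])
      have "\<bar>R\<bar> ^ DIM('a) * ((eta_fun m (x /\<^sub>R R) - eta_fun m z)\<^sup>2 / (R * norm (x /\<^sub>R R - z)) powr p)
         = (R powr real DIM('a) / R powr p) * ((eta_fun m (x /\<^sub>R R) - eta_fun m z)\<^sup>2 / norm (x /\<^sub>R R - z) powr p)"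
        unfolding h1 h2 by simp
      then show ?thesis unfolding h3 .
    qed
    then show "ennreal (\<bar>R\<bar> ^ DIM('a)) * f (R *\<^sub>R z) = ennreal (R powr (- 2 * s)) * ennreal ((eta_fun m (x /\<^sub>R R) - eta_fun m z)\<^sup>2
            / norm (x /\<^sub>R R - z) powr p)"
      unfolding f_def n using R by (simp add: ennreal_mult[symmetric])
  qed
  also have "\<dots> = ennreal (R powr (- 2 * s)) * frac_rho s (eta_fun m) (x /\<^sub>R R)"
    unfolding frac_rho_def p_def by (rule nn_integral_cmult) measurable
  finally show ?thesis unfolding f_def p_def .
qed


lemma sq_sum_le: "((u::real) + v)\<^sup>2 \<le> 2 * u\<^sup>2 + 2 * v\<^sup>2"
proof -
  have "0 \<le> (u - v)\<^sup>2" by simp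
  moreover have "(u + v)\<^sup>2 = 2 * u\<^sup>2 + 2 * v\<^sup>2 - (u - v)\<^sup>2"
    by (simp add: power2_eq_square algebra_simps)
  ultimately show ?thesis by linarith
qed

lemma sq_le1: "0 \<le> u \<Longrightarrow> u \<le> 1 \<Longrightarrow> 0 \<le> v \<Longrightarrow> v \<le> 1 \<Longrightarrow> (u - v)\<^sup>2 \<le> (1::real)"
  by (simp add: abs_square_le_1 abs_le_iff)

theorem lemma2p5:
  fixes s m R0 :: real and \<psi> :: "'a::euclidean_space \<Rightarrow> real"
  assumes "0 < s" "s < 1"
    and "m > real DIM('a) / 2"
    and "R0 \<ge> 1"
    and "smooth_fun \<psi>"
    and "\<And>x. 0 \<le> \<psi> x" "\<And>x. \<psi> x \<le> 1"
    and "\<And>x. norm x < 1 \<Longrightarrow> \<psi> x = 0"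
    and "\<And>x. norm x \<ge> 2 \<Longrightarrow> \<psi> x = 1"
  shows "\<exists>C>0. \<forall>R x. R \<ge> R0 \<longrightarrow>
     (let \<eta>R = (\<lambda>z. eta_fun m (z /\<^sub>R R) * \<psi> (z /\<^sub>R R0)) in
       (norm x \<ge> 3 * R0 \<longrightarrow>
          frac_rho s \<eta>R x \<le> ennreal (C * (eta_fun m (x /\<^sub>R R))\<^sup>2 * norm x powr (- real DIM('a) - 2 * s))
                             + 2 * ennreal (R powr (- 2 * s)) * frac_rho s (eta_fun m) (x /\<^sub>R R)) \<and>
       (norm x \<le> 3 * R0 \<longrightarrow>
          frac_rho s \<eta>R x \<le> ennreal C + 2 * ennreal (R powr (- 2 * s)) * frac_rho s (eta_fun m) (x /\<^sub>R R)))"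
proof -
  note s0 = assms(1) and s1 = assms(2) and R01 = assms(4) and ps0 = assms(6) and ps1 = assms(7)
    and ps2 = assms(9)
  define N where "N = DIM('a)"
  define p where "p = real N + 2 * s"
  define \<omega> where "\<omega> = unit_ball_vol (real N)"
  have \<omega>0: "0 \<le> \<omega>" unfolding \<omega>_def by simp
  have p0: "0 < p" unfolding p_def using s0 by simp
  have "0 < real DIM('a) / 2" by simp
  then have m0: "0 < m" using assms(3) by linarith
  have psc: "continuous_on UNIV \<psi>"
    using assms(5) by (auto elim: smooth_fun.cases intro: differentiable_imp_continuous_on)
  have psm[measurable]: "\<psi> \<in> borel_measurable borel" by (rule borel_measurable_continuous_onI[OF psc])
  obtain L where L0: "0 \<le> L" and L: "\<And>u v. \<bar>\<psi> u - \<psi> v\<bar> \<le> L * norm (u - v)"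
    using psi_lip[OF assms(5) ps2] by blast
  define Lb where "Lb = L / R0"
  define W where "W = Lb\<^sup>2"
  have W0: "0 \<le> W" unfolding W_def by simp
  obtain K where K: "\<And>x::'a. (\<integral>\<^sup>+ y. ennreal (min (W * (norm (x - y))\<^sup>2) 1
            / norm (x - y) powr (real DIM('a) + 2 * s)) \<partial>lborel) \<le> ennreal K"
    using kernel_bound[OF s0 s1 W0] by blast
  define C1 where "C1 = 2 * (3 powr p * \<omega> * (2 * R0) ^ N)"
  have C10: "0 \<le> C1" unfolding C1_def using \<omega>0 R01 by simp
  define C where "C = C1 + 2 * max K 0 + 1"
  have eta01: "0 \<le> eta_fun m z \<and> eta_fun m z \<le> 1" for z :: 'a
  proof -
    have "(1 + (norm z)\<^sup>2) powr (- m / 2) \<le> (1 + (norm z)\<^sup>2) powr 0"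
      using m0 by (intro powr_mono) auto
    then have "(1 + (norm z)\<^sup>2) powr (- m / 2) \<le> 1"
      by (simp add: add_nonneg_eq_0_iff)
    then show ?thesis unfolding eta_fun_def by simp
  qed
  show ?thesis
  proof (intro exI[of _ C] conjI allI impI)
    show "0 < C" unfolding C_def using C10 by simp
    fix R :: real and x :: 'a
    assume RR0: "R0 \<le> R"
    have R0: "0 < R" using RR0 R01 by simp
    define a where "a z = eta_fun m (z /\<^sub>R R)" for z :: 'a
    define b where "b z = \<psi> (z /\<^sub>R R0)" for z :: 'a
    define G where "G y = (b x - b y)\<^sup>2 / norm (x - y) powr p" for y
    define H where "H y = (a x - a y)\<^sup>2 / norm (x - y) powr p" for y
    have am[measurable]: "a \<in> borel_measurable borel" unfolding a_def by measurable
    have bm[measurable]: "b \<in> borel_measurable borel" unfolding b_def by measurable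
    have Gm[measurable]: "G \<in> borel_measurable lborel" unfolding G_def by measurable
    have Hm[measurable]: "H \<in> borel_measurable lborel" unfolding H_def by measurable
    have b01: "0 \<le> b z \<and> b z \<le> 1" for z unfolding b_def using ps0 ps1 by auto
    have a01: "0 \<le> a z \<and> a z \<le> 1" for z unfolding a_def using eta01 by auto
    have main: "frac_rho s (\<lambda>z. a z * b z) x
        \<le> ennreal (2 * (a x)\<^sup>2) * (\<integral>\<^sup>+ y. ennreal (G y) \<partial>lborel)
          + 2 * ennreal (R powr (- 2 * s)) * frac_rho s (eta_fun m) (x /\<^sub>R R)"
    proof -
      have pw: "ennreal ((a x * b x - a y * b y)\<^sup>2 / norm (x - y) powr p)
          \<le> ennreal (2 * (a x)\<^sup>2 * G y) + ennreal (2 * H y)" for y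
      proof -
        have num: "(a x * b x - a y * b y)\<^sup>2 \<le> 2 * (a x)\<^sup>2 * (b x - b y)\<^sup>2 + 2 * (a x - a y)\<^sup>2"
        proof -
          have e: "a x * b x - a y * b y = a x * (b x - b y) + b y * (a x - a y)" by (simp add: algebra_simps)
          have "(a x * (b x - b y) + b y * (a x - a y))\<^sup>2
              \<le> 2 * (a x * (b x - b y))\<^sup>2 + 2 * (b y * (a x - a y))\<^sup>2"
            by (rule sq_sum_le)
          moreover have "(b y * (a x - a y))\<^sup>2 \<le> (a x - a y)\<^sup>2"
          proof -
            have "(b y)\<^sup>2 \<le> 1" using b01[of y] by (simp add: power_le_one)
            then have "(b y)\<^sup>2 * (a x - a y)\<^sup>2 \<le> 1 * (a x - a y)\<^sup>2" by (intro mult_right_mono) auto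
            then show ?thesis by (simp add: power_mult_distrib)
          qed
          ultimately show ?thesis unfolding e by (simp add: power_mult_distrib)
        qed
        have "(a x * b x - a y * b y)\<^sup>2 / norm (x - y) powr p
            \<le> (2 * (a x)\<^sup>2 * (b x - b y)\<^sup>2 + 2 * (a x - a y)\<^sup>2) / norm (x - y) powr p"
          by (intro divide_right_mono num) simp
        also have "\<dots> = 2 * (a x)\<^sup>2 * G y + 2 * H y"
          unfolding G_def H_def by (simp add: add_divide_distrib)
        finally have le: "(a x * b x - a y * b y)\<^sup>2 / norm (x - y) powr p \<le> 2 * (a x)\<^sup>2 * G y + 2 * H y" .
        have nG: "0 \<le> 2 * (a x)\<^sup>2 * G y" unfolding G_def by simp
        have nH: "0 \<le> 2 * H y" unfolding H_def by simp
        show ?thesis using ennreal_leI[OF le] ennreal_plus[OF nG nH] by simp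
      qed
      have "frac_rho s (\<lambda>z. a z * b z) x
          \<le> (\<integral>\<^sup>+ y. ennreal (2 * (a x)\<^sup>2 * G y) + ennreal (2 * H y) \<partial>lborel)"
        unfolding frac_rho_def p_def[symmetric] N_def[symmetric] by (intro nn_integral_mono pw)
      also have "\<dots> = (\<integral>\<^sup>+ y. ennreal (2 * (a x)\<^sup>2 * G y) \<partial>lborel)
           + (\<integral>\<^sup>+ y. ennreal (2 * H y) \<partial>lborel)"
        by (rule nn_integral_add) measurable
      also have "(\<integral>\<^sup>+ y. ennreal (2 * (a x)\<^sup>2 * G y) \<partial>lborel)
          = (\<integral>\<^sup>+ y. ennreal (2 * (a x)\<^sup>2) * ennreal (G y) \<partial>lborel)"
        by (intro nn_integral_cong ennreal_mult') simp
      also have "\<dots> = ennreal (2 * (a x)\<^sup>2) * (\<integral>\<^sup>+ y. ennreal (G y) \<partial>lborel)"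
        by (rule nn_integral_cmult) measurable
      also have "(\<integral>\<^sup>+ y. ennreal (2 * H y) \<partial>lborel) = (\<integral>\<^sup>+ y. 2 * ennreal (H y) \<partial>lborel)"
        by (intro nn_integral_cong) (simp add: ennreal_mult')
      also have "\<dots> = 2 * (\<integral>\<^sup>+ y. ennreal (H y) \<partial>lborel)"
        by (rule nn_integral_cmult) measurable
      also have "(\<integral>\<^sup>+ y. ennreal (H y) \<partial>lborel) = ennreal (R powr (- 2 * s)) * frac_rho s (eta_fun m) (x /\<^sub>R R)"
        unfolding H_def a_def p_def N_def by (rule scale_rho[OF R0])
      finally show ?thesis by (simp add: mult.assoc)
    qed
    have GK: "(\<integral>\<^sup>+ y. ennreal (G y) \<partial>lborel) \<le> ennreal K"
    proof -
      have "ennreal (G y) \<le> ennreal (min (W * (norm (x - y))\<^sup>2) 1 / norm (x - y) powr (real DIM('a) + 2 * s))" for y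
      proof (intro ennreal_leI)
        have "\<bar>b x - b y\<bar> \<le> L * norm (x /\<^sub>R R0 - y /\<^sub>R R0)" unfolding b_def by (rule L)
        also have "norm (x /\<^sub>R R0 - y /\<^sub>R R0) = norm (x - y) / R0"
          using R01 by (simp add: scaleR_diff_right[symmetric] divide_inverse_commute)
        finally have "\<bar>b x - b y\<bar> \<le> Lb * norm (x - y)" unfolding Lb_def by simp
        then have "(b x - b y)\<^sup>2 \<le> (Lb * norm (x - y))\<^sup>2"
          by (metis abs_ge_zero power2_abs power_mono)
        then have 1: "(b x - b y)\<^sup>2 \<le> W * (norm (x - y))\<^sup>2" unfolding W_def by (simp add: power_mult_distrib)
        have 2: "(b x - b y)\<^sup>2 \<le> 1"
          using b01[of x] b01[of y] by (intro sq_le1) auto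
        show "G y \<le> min (W * (norm (x - y))\<^sup>2) 1 / norm (x - y) powr (real DIM('a) + 2 * s)"
          unfolding G_def p_def N_def using 1 2 by (intro divide_right_mono) auto
      qed
      then have "(\<integral>\<^sup>+ y. ennreal (G y) \<partial>lborel) \<le> (\<integral>\<^sup>+ y. ennreal (min (W * (norm (x - y))\<^sup>2) 1 / norm (x - y) powr (real DIM('a) + 2 * s)) \<partial>lborel)"
        by (intro nn_integral_mono)
      then show ?thesis using K[of x] by (rule order_trans)
    qed
    let ?T = "2 * ennreal (R powr (- 2 * s)) * frac_rho s (eta_fun m) (x /\<^sub>R R)"
    have eR: "(let \<eta>R = (\<lambda>z. eta_fun m (z /\<^sub>R R) * \<psi> (z /\<^sub>R R0)) in Q \<eta>R) = Q (\<lambda>z. a z * b z)" for Q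
      unfolding a_def b_def by simp
    show "let \<eta>R = (\<lambda>z. eta_fun m (z /\<^sub>R R) * \<psi> (z /\<^sub>R R0)) in
       (norm x \<ge> 3 * R0 \<longrightarrow>
          frac_rho s \<eta>R x \<le> ennreal (C * (eta_fun m (x /\<^sub>R R))\<^sup>2 * norm x powr (- real DIM('a) - 2 * s))
                             + ?T) \<and>
       (norm x \<le> 3 * R0 \<longrightarrow> frac_rho s \<eta>R x \<le> ennreal C + ?T)"
      unfolding eR
    proof (intro conjI impI)
      assume x3: "norm x \<le> 3 * R0"
      have GK': "(\<integral>\<^sup>+ y. ennreal (G y) \<partial>lborel) \<le> ennreal (max K 0)"
        using GK by (rule order_trans) (rule ennreal_leI, simp)
      have "ennreal (2 * (a x)\<^sup>2) * (\<integral>\<^sup>+ y. ennreal (G y) \<partial>lborel) \<le> ennreal (2 * (a x)\<^sup>2) * ennreal (max K 0)"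
        by (intro mult_left_mono GK') simp
      also have "\<dots> = ennreal (2 * (a x)\<^sup>2 * max K 0)" by (rule ennreal_mult'[symmetric]) simp
      also have "\<dots> \<le> ennreal C"
      proof (intro ennreal_leI)
        have "(a x)\<^sup>2 \<le> 1" using a01[of x] by (simp add: power_le_one)
        then have "2 * (a x)\<^sup>2 * max K 0 \<le> 2 * 1 * max K 0" by (intro mult_right_mono mult_left_mono) auto
        then show "2 * (a x)\<^sup>2 * max K 0 \<le> C" unfolding C_def using C10 by simp
      qed
      finally show "frac_rho s (\<lambda>z. a z * b z) x \<le> ennreal C + ?T"
        using main by (meson add_right_mono order_trans)
    next
      assume x3: "3 * R0 \<le> norm x"
      define c where "c = 3 powr p * norm x powr (- p)"
      have xpos: "0 < norm x" using x3 R01 by linarith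
      have "ennreal (G y) \<le> ennreal c * indicator (cball 0 (2 * R0)) y" for y
      proof (cases "norm y \<le> 2 * R0")
        case False
        have "b y = 1" unfolding b_def using False R01
          by (intro ps2) (simp add: divide_simps)
        moreover have "b x = 1" unfolding b_def using x3 R01
          by (intro ps2) (simp add: divide_simps)
        ultimately show ?thesis by (simp add: G_def)
      next
        case True
        have d: "norm x / 3 \<le> norm (x - y)"
          using norm_triangle_ineq2[of x y] True x3 by simp
        have "G y \<le> 1 / norm (x - y) powr p"
        proof -
          have "(b x - b y)\<^sup>2 \<le> 1"
            using b01[of x] b01[of y] by (intro sq_le1) auto
          then show ?thesis unfolding G_def by (intro divide_right_mono) auto
        qed
        also have "\<dots> = norm (x - y) powr (- p)" by (simp add: powr_minus_divide)
        also have "\<dots> \<le> (norm x / 3) powr (- p)" using d xpos p0 by (intro powr_mono2') auto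
        also have "\<dots> = c"
        proof -
          have "(norm x / 3) powr (-p) = norm x powr (-p) / 3 powr (-p)"
            using powr_divide[of "norm x" 3 "-p"] by linarith
          also have "3 powr (-p) = 1 / 3 powr p" by (rule powr_minus_divide)
          finally show ?thesis unfolding c_def by simp
        qed
        finally show ?thesis using True by (auto intro: ennreal_leI)
      qed
      note pw2 = this
      have "(\<integral>\<^sup>+ y. ennreal (G y) \<partial>lborel) \<le> (\<integral>\<^sup>+ y. ennreal c * indicator (cball (0::'a) (2 * R0)) y \<partial>lborel)"
        by (rule nn_integral_mono, rule pw2)
      also have "\<dots> = ennreal c * emeasure lborel (cball (0::'a) (2 * R0))"
        by (rule nn_integral_cmult_indicator) (rule cball_sets)
      also have "\<dots> = ennreal (c * (\<omega> * (2 * R0) ^ N))"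
        using R01 by (simp add: emeasure_cball \<omega>_def N_def ennreal_mult c_def)
      finally have GB: "(\<integral>\<^sup>+ y. ennreal (G y) \<partial>lborel) \<le> ennreal (c * (\<omega> * (2 * R0) ^ N))" .
      have "ennreal (2 * (a x)\<^sup>2) * (\<integral>\<^sup>+ y. ennreal (G y) \<partial>lborel)
          \<le> ennreal (2 * (a x)\<^sup>2) * ennreal (c * (\<omega> * (2 * R0) ^ N))"
        using GB by (intro mult_left_mono) auto
      also have "\<dots> = ennreal (2 * (a x)\<^sup>2 * (c * (\<omega> * (2 * R0) ^ N)))"
        by (rule ennreal_mult'[symmetric]) simp
      also have "2 * (a x)\<^sup>2 * (c * (\<omega> * (2 * R0) ^ N)) = C1 * (a x)\<^sup>2 * norm x powr (- p)"
        unfolding C1_def c_def by (simp only: mult_ac)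
      also have "\<dots> \<le> ennreal (C * (eta_fun m (x /\<^sub>R R))\<^sup>2 * norm x powr (- real DIM('a) - 2 * s))"
      proof (intro ennreal_leI)
        have "C1 \<le> C" unfolding C_def by simp
        then have "C1 * ((a x)\<^sup>2 * norm x powr (- p)) \<le> C * ((a x)\<^sup>2 * norm x powr (- p))"
          by (intro mult_right_mono) auto
        moreover have "- real DIM('a) - 2 * s = - p" unfolding p_def N_def by simp
        ultimately show "C1 * (a x)\<^sup>2 * norm x powr (- p) \<le> C * (eta_fun m (x /\<^sub>R R))\<^sup>2 * norm x powr (- real DIM('a) - 2 * s)"
          unfolding a_def by (simp add: mult.assoc)
      qed
      finally show "frac_rho s (\<lambda>z. a z * b z) x \<le> ennreal (C * (eta_fun m (x /\<^sub>R R))\<^sup>2 * norm x powr (- real DIM('a) - 2 * s)) + ?T"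
        using main by (meson add_right_mono order_trans)
    qed
  qed
qed

end
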